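(* Let $V\colon\mathbb{R}^3\to S^2$ define a line fibration of $\mathbb{R}^3$ whose induced plane field $\xi=\ker(V_1\,\mathrm{d}x_1+V_2\,\mathrm{d}x_2+V_3\,\mathrm{d}x_3)$ is a contact structure. Suppose that for every line $\ell$ of the fibration there exists a line $\ell'\neq\ell$ of the fibration parallel to $\ell$. Then $\mathrm{d}_pV$ has rank exactly $1$ at every point $p\in\mathbb{R}^3$. *)

theory Defs
  imports "HOL-Analysis.Analysis"
begin

coinductive smooth_map :: "('a::real_normed_vector \<Rightarrow> 'b::real_normed_vector) \<Rightarrow> bool" where
  "(\<forall>x. f differentiable (at x)) \<Longrightarrow> (\<forall>v. smooth_map (\<lambda>x. frechet_derivative f (at x) v))
     \<Longrightarrow> smooth_map f"

definition pd :: "(real^3 \<Rightarrow> real^3) \<Rightarrow> 3 \<Rightarrow> 3 \<Rightarrow> real^3 \<Rightarrow> real" where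
  "pd V i j p = frechet_derivative V (at p) (axis i 1) $ j"

text \<open>Curl of V; for alpha = V1 dx1 + V2 dx2 + V3 dx3 one has
  alpha /\ d alpha = (V . curl V) dx1 /\ dx2 /\ dx3.\<close>
definition curl :: "(real^3 \<Rightarrow> real^3) \<Rightarrow> real^3 \<Rightarrow> real^3" where
  "curl V p = vector [pd V 2 3 p - pd V 3 2 p, pd V 3 1 p - pd V 1 3 p, pd V 1 2 p - pd V 2 1 p]"

definition contact_field :: "(real^3 \<Rightarrow> real^3) \<Rightarrow> bool" where
  "contact_field V \<longleftrightarrow> (\<forall>p. V p \<bullet> curl V p \<noteq> 0)"

definition fib_line :: "(real^3 \<Rightarrow> real^3) \<Rightarrow> real^3 \<Rightarrow> (real^3) set" where
  "fib_line V p = range (\<lambda>t::real. p + t *\<^sub>R V p)"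

definition line_fibration :: "(real^3 \<Rightarrow> real^3) \<Rightarrow> bool" where
  "line_fibration V \<longleftrightarrow> smooth_map V \<and> (\<forall>p. norm (V p) = 1) \<and>
     (\<forall>p q. q \<in> fib_line V p \<longrightarrow> fib_line V q = fib_line V p)"

end

theory Submission
  imports Defs
begin

lemma kernel2_rank:
  fixes D :: "real^3 \<Rightarrow> real^3"
  assumes lin: "linear D" and w: "D w = 0" "w \<noteq> 0" and k: "D k = 0" and kspan: "k \<notin> span {w}"
  shows "dim (range D) \<le> 1"
proof -
  have ind2: "independent {k, w}"
    using w kspan by (auto simp: independent_insert)
  have "dim {k,w} \<le> card {k,w}" by (rule dim_le_card') simp
  also have "\<dots> \<le> 2" by (simp add: card_insert_if)
  finally have "dim (span {k,w}) \<le> 2" by simp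
  moreover have "dim (UNIV :: (real^3) set) = 3" by simp
  ultimately have "span {k,w} \<noteq> UNIV" by (intro notI) simp
  then obtain e where e: "e \<notin> span {k,w}" by blast
  have ind3: "independent {e,k,w}" using ind2 e by (simp add: independent_insertI)
  have card3: "card {e,k,w} = 3"
    using e kspan span_base[of e "{k,w}"] span_base[of k "{w}"] by (auto simp: card_insert_if)
  have "UNIV \<subseteq> span {e,k,w}"
    using card_eq_dim[of "{e,k,w}" UNIV] ind3 card3 by simp
  then have "range D = D ` span {e,k,w}" by auto
  also have "\<dots> = span (D ` {e,k,w})" using span_linear_image[OF lin, of "{e,k,w}"] by simp
  also have "\<dots> = span {D e}" using w k by (simp add: insert_commute)
  finally have "dim (range D) = dim (span {D e})" by simp
  also have "\<dots> = dim {D e}" by simp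
  also have "\<dots> \<le> card {D e}" by (rule dim_le_card') simp
  finally show ?thesis by simp
qed
lemma no_rank2:
  fixes V :: "real^3 \<Rightarrow> real^3"
  assumes fib: "\<forall>p q. q \<in> fib_line V p \<longrightarrow> fib_line V q = fib_line V p"
    and contV: "continuous_on UNIV V"
    and dV: "(V has_derivative D) (at p)"
    and nrm: "\<forall>x. norm (V x) = 1"
    and nv: "n \<bullet> V p = 1"
    and ker: "\<And>w. D w = 0 \<Longrightarrow> n \<bullet> w = 0 \<Longrightarrow> w = 0"
    and orth: "\<And>w. V p \<bullet> D w = 0"
    and y0: "(y0 - p) \<bullet> n = 0" "y0 \<noteq> p" "V y0 = m *\<^sub>R V p"
  shows False
proof -
  define v where "v = V p"
  define u where "u x = inverse (V x \<bullet> n) *\<^sub>R V x" for x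
  define Psi where "Psi x = u x - v + ((x - p) \<bullet> n) *\<^sub>R n" for x
  define L where "L w = D w - (D w \<bullet> n) *\<^sub>R v + (w \<bullet> n) *\<^sub>R n" for w
  have vn: "v \<bullet> n = 1" using nv by (simp add: v_def inner_commute)
  have vv: "v \<bullet> v = 1" using nrm by (simp add: v_def dot_square_norm)
  have m0: "m \<noteq> 0" using nrm y0(3) by (metis norm_zero scale_zero_left zero_neq_one)
  have uy0: "u y0 = v" using m0 vn by (simp add: u_def y0(3) v_def[symmetric])
  have up: "u p = v" using vn by (simp add: u_def v_def[symmetric])
  have Psip: "Psi p = 0" by (simp add: Psi_def up)
  have dPsi: "(Psi has_derivative L) (at p)"
    unfolding Psi_def u_def L_def
    apply (rule derivative_eq_intros refl dV | simp add: v_def nv inner_commute)+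
    done
  have linL: "linear L" using has_derivative_linear[OF dPsi] .
  have injL: "inj L"
  proof (rule linear_injective_0[OF linL, THEN iffD2], intro allI impI)
    fix w assume Lw: "L w = 0"
    have nv': "n \<bullet> v = 1" using nv by (simp add: v_def)
    have "n \<bullet> L w = (n \<bullet> w) * (n \<bullet> n)"
      by (simp add: L_def inner_diff_right inner_add_right nv' inner_commute[of "D w" n] inner_commute[of w n])
    moreover have "n \<noteq> 0" using nv by auto
    ultimately have wn: "w \<bullet> n = 0" using Lw by (simp add: inner_commute)
    have "L w \<bullet> v = D w \<bullet> v - D w \<bullet> n"
      by (simp add: L_def inner_diff_left inner_add_left vv wn)
    then have "D w \<bullet> n = 0" using Lw orth by (simp add: v_def inner_commute)
    then have "D w = 0" using Lw by (simp add: L_def wn)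
    then show "w = 0" using ker wn by (simp add: inner_commute)
  qed
  obtain g where ling: "linear g" and gL: "g \<circ> L = id"
    using linear_injective_left_inverse[OF linL injL] by blast
  have Lg: "L \<circ> g = id" using linear_inverse_left[OF ling linL] gL by simp
  have Lg': "L (g y) = y" for y using Lg by (simp add: fun_eq_iff)
  have gL': "g (L y) = y" for y using gL by (simp add: fun_eq_iff)
  obtain B where B0: "B > 0" and Bg: "\<And>y. norm (g y) \<le> B * norm y"
    using linear_bounded_pos[OF ling] by blast
  obtain d1 where d1: "d1 > 0" and
    d1P: "\<And>x. norm (x - p) < d1 \<Longrightarrow> norm (Psi x - Psi p - L (x - p)) \<le> (1 / (2*B)) * norm (x - p)"
    using dPsi[unfolded has_derivative_at_alt] B0
    by (metis divide_pos_pos zero_less_numeral mult_pos_pos zero_less_one)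
  have nn: "norm n \<ge> 1"
    using Cauchy_Schwarz_ineq2[of n v] nv nrm by (simp add: v_def)
  obtain d2 where d2: "d2 > 0" and
    d2P: "\<And>x. dist x p < d2 \<Longrightarrow> dist (V x) (V p) < 1 / (2 * norm n)"
    using contV[unfolded continuous_on_iff] nn by (metis UNIV_I divide_pos_pos zero_less_numeral mult_pos_pos zero_less_one less_le_trans zero_less_one)
  have Vxn: "V x \<bullet> n > 1/2" if "dist x p < d2" for x
  proof -
    have "\<bar>(V x - V p) \<bullet> n\<bar> \<le> norm (V x - V p) * norm n" by (rule Cauchy_Schwarz_ineq2)
    also have "\<dots> < (1 / (2 * norm n)) * norm n"
      using d2P[OF that] nn by (intro mult_strict_right_mono) (auto simp: dist_norm)
    also have "\<dots> = 1/2" using nn by (cases "n = 0") auto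
    finally have "\<bar>n \<bullet> (V x - V p)\<bar> < 1/2" by (simp add: inner_commute)
    then show ?thesis using nv by (simp add: inner_diff_right inner_commute[of _ n]) (smt (verit))
  qed
  define r where "r = norm (p - y0)"
  have r0: "r > 0" using y0(2) by (simp add: r_def)
  define rh where "rh = min (min d1 d2) r / 2"
  have rh0: "rh > 0" "rh < d1" "rh < d2" "rh < r" using d1 d2 r0 by (auto simp: rh_def)
  define c where "c = (rh / 2) / (B * (rh + r))"
  define lam where "lam = min (1/2) c"
  have c0: "c > 0" using rh0 r0 B0 by (simp add: c_def)
  have X0: "B * (rh + r) > 0" using rh0 r0 B0 by simp
  have gen: "\<And>a X::real. X > 0 \<Longrightarrow> a / X * X = a" by simp
  have cB: "c * (B * (rh + r)) = rh / 2" unfolding c_def using gen[OF X0] .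
  have lamc: "lam = min (1/2) c" by (simp add: lam_def)
  have lam0: "lam > 0" "lam \<le> 1/2" "lam * (B * (rh + r)) \<le> rh / 2"
  proof -
    show "lam > 0" "lam \<le> 1/2" using c0 by (auto simp: lamc)
    have "lam * (B * (rh + r)) \<le> c * (B * (rh + r))"
      using rh0 r0 B0 by (intro mult_right_mono) (auto simp: lamc)
    then show "lam * (B * (rh + r)) \<le> rh / 2" using cB by simp
  qed
  define N where "N x = x - g (Psi x - lam *\<^sub>R (x - y0))" for x
  have contPsi: "continuous_on (cball p rh) Psi"
  proof -
    have "continuous_on (cball p rh) V" using contV continuous_on_subset by blast
    moreover have "\<forall>x\<in>cball p rh. V x \<bullet> n \<noteq> 0"
    proof
      fix x assume "x \<in> cball p rh"
      then have "dist x p < d2" using rh0 by (simp add: dist_commute)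
      then show "V x \<bullet> n \<noteq> 0" using Vxn by force
    qed
    ultimately show ?thesis unfolding Psi_def u_def
      by (intro continuous_intros) auto
  qed
  have contg: "continuous_on UNIV g"
    by (rule linear_continuous_on) (use ling linear_conv_bounded_linear in blast)
  have contN: "continuous_on (cball p rh) N"
    unfolding N_def
    by (intro continuous_intros contPsi continuous_on_compose2[OF contg]) auto
  have Nmap: "N \<in> cball p rh \<rightarrow> cball p rh"
  proof
    fix x assume x: "x \<in> cball p rh"
    then have xp: "norm (x - p) \<le> rh" by (simp add: dist_norm norm_minus_commute)
    have eq: "N x - p = - g (Psi x - Psi p - L (x - p)) + lam *\<^sub>R g (x - y0)"
    proof -
      have e1: "g (Psi x - lam *\<^sub>R (x - y0)) = g (Psi x) - lam *\<^sub>R g (x - y0)"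
        using linear_diff[OF ling] linear_scale[OF ling] by simp
      have e2: "g (Psi x - Psi p - L (x - p)) = g (Psi x) - (x - p)"
        using linear_diff[OF ling] gL' Psip by simp
      show ?thesis unfolding N_def e1 e2 by (simp add: algebra_simps)
    qed
    have "norm (N x - p) \<le> norm (g (Psi x - Psi p - L (x - p))) + lam * norm (g (x - y0))"
      unfolding eq using lam0 by (metis norm_minus_cancel norm_scaleR abs_of_pos norm_triangle_ineq)
    also have "\<dots> \<le> B * ((1 / (2*B)) * norm (x - p)) + lam * (B * (rh + r))"
    proof -
      have b1: "norm (g (Psi x - Psi p - L (x - p))) \<le> B * ((1 / (2*B)) * norm (x - p))"
        using Bg[of "Psi x - Psi p - L (x - p)"] d1P[of x] xp rh0 B0
        by (smt (verit) mult_left_mono)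
      have "norm (x - y0) \<le> norm (x - p) + r" unfolding r_def
        using norm_triangle_ineq[of "x - p" "p - y0"] by simp
      then have "B * norm (x - y0) \<le> B * (rh + r)" using xp B0 by simp
      then have b2: "norm (g (x - y0)) \<le> B * (rh + r)" using Bg[of "x - y0"] by linarith
      show ?thesis using b1 b2 lam0 by (smt (verit) mult_left_mono)
    qed
    also have "\<dots> \<le> rh/2 + rh/2"
      using xp B0 lam0 by (intro add_mono) (auto simp: field_simps)
    finally show "N x \<in> cball p rh" by (simp add: dist_norm norm_minus_commute)
  qed
  obtain x where x: "x \<in> cball p rh" and Nx: "N x = x"
    using brouwer[OF compact_cball convex_cball _ contN Nmap] rh0 by auto
  have xp: "norm (x - p) \<le> rh" using x by (simp add: dist_norm norm_minus_commute)
  have "g (Psi x - lam *\<^sub>R (x - y0)) = 0" using Nx by (simp add: N_def)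
  then have Psix: "Psi x = lam *\<^sub>R (x - y0)"
    using Lg'[of "Psi x - lam *\<^sub>R (x - y0)"] linear_0[OF linL] by simp
  have xn: "V x \<bullet> n > 1/2" using Vxn[of x] xp rh0 by (simp add: dist_norm)
  have uxn: "u x \<bullet> n = 1" using xn by (simp add: u_def)
  have "Psi x \<bullet> n = ((x - p) \<bullet> n) * (n \<bullet> n)"
    by (simp add: Psi_def inner_diff_left inner_add_left uxn vn)
  moreover have "(lam *\<^sub>R (x - y0)) \<bullet> n = lam * ((x - p) \<bullet> n)"
    using y0(1) by (simp add: inner_diff_left)
  ultimately have "((x - p) \<bullet> n) * (n \<bullet> n - lam) = 0" using Psix by (simp add: algebra_simps)
  moreover have "n \<bullet> n - lam > 0"
  proof -
    have "n \<bullet> n = norm n ^ 2" by (simp add: dot_square_norm)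
    moreover have "norm n ^ 2 \<ge> 1" using nn by (simp add: one_le_power)
    ultimately show ?thesis using lam0 by linarith
  qed
  ultimately have xH: "(x - p) \<bullet> n = 0" by simp
  have ueq: "u x - v = lam *\<^sub>R (x - y0)" using Psix by (simp add: Psi_def xH)
  have xy: "x \<noteq> y0" using xp rh0 by (auto simp: r_def norm_minus_commute)
  define z where "z = x - inverse lam *\<^sub>R u x"
  have z1: "z \<in> fib_line V x" unfolding fib_line_def z_def u_def
    by (rule range_eqI[of _ _ "- (inverse lam * inverse (V x \<bullet> n))"]) simp
  have z2: "z = y0 - inverse lam *\<^sub>R u y0"
  proof -
    have "u x = v + lam *\<^sub>R (x - y0)" using ueq by (simp add: algebra_simps)
    then have "inverse lam *\<^sub>R u x = inverse lam *\<^sub>R v + (x - y0)"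
      using lam0 by (simp add: scaleR_add_right)
    then show ?thesis by (simp add: z_def uy0)
  qed
  have z2': "z \<in> fib_line V y0" unfolding fib_line_def z2 u_def
    by (rule range_eqI[of _ _ "- (inverse lam * inverse (V y0 \<bullet> n))"]) simp
  have "y0 \<in> fib_line V y0" unfolding fib_line_def by (rule range_eqI[of _ _ 0]) simp
  then have "y0 \<in> fib_line V x" using fib z1 z2' by metis
  then obtain s where s: "y0 = x + s *\<^sub>R V x" by (auto simp: fib_line_def)
  have "(y0 - p) \<bullet> n = (x - p) \<bullet> n + s * (V x \<bullet> n)"
    by (simp add: s inner_diff_left inner_add_left algebra_simps)
  then have "s * (V x \<bullet> n) = 0" using y0(1) xH by simp
  then have "s = 0" using xn by simp
  then show False using s xy by simp
qed

lemma smooth_diff: "smooth_map f \<Longrightarrow> f differentiable (at x)"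
  by (erule smooth_map.cases) auto

theorem mainTheorem3:
  fixes V :: "real^3 \<Rightarrow> real^3"
  assumes "line_fibration V"
    and "contact_field V"
    and "\<forall>p. \<exists>q. fib_line V q \<noteq> fib_line V p \<and> (\<exists>c::real. V q = c *\<^sub>R V p)"
  shows "\<forall>p. dim (range (frechet_derivative V (at p))) = 1"
proof
  fix p
  have sm: "smooth_map V" and nrm: "\<forall>x. norm (V x) = 1"
    and fib: "\<forall>p q. q \<in> fib_line V p \<longrightarrow> fib_line V q = fib_line V p"
    using assms(1) by (auto simp: line_fibration_def)
  define D where "D = frechet_derivative V (at p)"
  have dV: "(V has_derivative D) (at p)"
    unfolding D_def using smooth_diff[OF sm] frechet_derivative_works by blast
  have linD: "linear D" using has_derivative_linear[OF dV] .
  have contV: "continuous_on UNIV V"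
    by (intro continuous_at_imp_continuous_on ballI differentiable_imp_continuous_within smooth_diff[OF sm])
  have orth: "V p \<bullet> D w = 0" for w
  proof -
    have c1: "(\<lambda>x. V x \<bullet> V x) = (\<lambda>x. 1)" using nrm by (simp add: fun_eq_iff dot_square_norm)
    have "((\<lambda>x. V x \<bullet> V x) has_derivative (\<lambda>w. V p \<bullet> D w + D w \<bullet> V p)) (at p)"
      by (rule has_derivative_inner[OF dV dV])
    moreover have "((\<lambda>x. V x \<bullet> V x) has_derivative (\<lambda>w. 0)) (at p)"
      unfolding c1 by (rule has_derivative_const)
    ultimately have "(\<lambda>w. V p \<bullet> D w + D w \<bullet> V p) = (\<lambda>w. 0)" by (rule has_derivative_unique)
    then have "V p \<bullet> D w + D w \<bullet> V p = 0" by metis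
    then show ?thesis by (simp add: inner_commute)
  qed
  have Vp0: "V p \<noteq> 0" using nrm by (metis norm_zero zero_neq_one)
  have le2: "dim (range D) \<le> 2"
  proof -
    have "range D \<subseteq> {y. V p \<bullet> y = 0}" using orth by auto
    then have "dim (range D) \<le> dim {y. V p \<bullet> y = 0}" by (rule dim_subset)
    also have "\<dots> = 2" using dim_hyperplane[OF Vp0] by simp
    finally show ?thesis .
  qed
  have ge1: "dim (range D) \<noteq> 0"
  proof
    assume "dim (range D) = 0"
    then have "range D \<subseteq> {0}" by simp
    then have D0: "D w = 0" for w by auto
    have "pd V i j p = 0" for i j by (simp add: pd_def D_def[symmetric] D0)
    then have "curl V p = 0" by (simp add: curl_def vec_eq_iff forall_3 vector_3)
    then show False using assms(2) unfolding contact_field_def by (metis inner_zero_right)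
  qed
  have ne2: "dim (range D) \<noteq> 2"
  proof
    assume d2: "dim (range D) = 2"
    obtain n where nv: "n \<bullet> V p = 1" and ker: "\<And>w. D w = 0 \<Longrightarrow> n \<bullet> w = 0 \<Longrightarrow> w = 0"
    proof (cases "\<exists>k. k \<noteq> 0 \<and> D k = 0")
      case False
      show ?thesis
        by (rule that[of "V p"]) (use False nrm in \<open>auto simp: dot_square_norm\<close>)
    next
      case True
      then obtain k where k: "k \<noteq> 0" "D k = 0" by blast
      obtain n where nv: "n \<bullet> V p = 1" and nk: "n \<bullet> k \<noteq> 0"
      proof (cases "V p \<bullet> k = 0")
        case True
        show ?thesis
        proof (rule that[of "V p + k"])
          have vv: "V p \<bullet> V p = 1" using nrm by (simp add: dot_square_norm)
          have kv: "k \<bullet> V p = 0" "V p \<bullet> k = 0" using True by (auto simp: inner_commute)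
          show "(V p + k) \<bullet> V p = 1" using vv kv by (simp add: inner_add_left)
          show "(V p + k) \<bullet> k \<noteq> 0" using kv k by (simp add: inner_add_left)
        qed
      next
        case False
        show ?thesis
          by (rule that[of "V p"]) (use False nrm in \<open>auto simp: dot_square_norm\<close>)
      qed
      show ?thesis
      proof (rule that[OF nv])
        fix w assume w: "D w = 0" "n \<bullet> w = 0"
        show "w = 0"
        proof (rule ccontr)
          assume w0: "w \<noteq> 0"
          have "k \<notin> span {w}"
          proof
            assume "k \<in> span {w}"
            then obtain c where "k = c *\<^sub>R w" by (auto simp: span_singleton)
            then show False using nk w(2) by simp
          qed
          then have "dim (range D) \<le> 1" using kernel2_rank[OF linD w(1) w0 k(2)] by simp
          then show False using d2 by simp
        qed
      qed
    qed
    obtain q c where q: "fib_line V q \<noteq> fib_line V p" and qc: "V q = c *\<^sub>R V p"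
      using assms(3) by blast
    have c0: "c \<noteq> 0" using nrm qc by (metis norm_zero scale_zero_left zero_neq_one)
    have qn: "n \<bullet> V q = c" using qc nv by simp
    define s where "s = ((p - q) \<bullet> n) / c"
    define y0 where "y0 = q + s *\<^sub>R V q"
    have y0n: "(y0 - p) \<bullet> n = 0"
      using c0 qn by (simp add: y0_def s_def inner_diff_left inner_add_left inner_commute[of n] field_simps)
    have "y0 \<in> fib_line V q" unfolding fib_line_def y0_def by (rule rangeI)
    then have fy0: "fib_line V y0 = fib_line V q" using fib by blast
    have y0p: "y0 \<noteq> p" using fy0 q by auto
    have "y0 + V y0 \<in> fib_line V y0" unfolding fib_line_def by (rule range_eqI[of _ _ 1]) simp
    then obtain a where a: "y0 + V y0 = q + a *\<^sub>R V q" using fy0 by (auto simp: fib_line_def)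
    have "V y0 = (a - s) *\<^sub>R V q" using a by (simp add: y0_def algebra_simps)
    then have my0: "V y0 = ((a - s) * c) *\<^sub>R V p" by (simp add: qc)
    show False
      by (rule no_rank2[OF fib contV dV nrm nv ker orth y0n y0p my0])
  qed
  show "dim (range (frechet_derivative V (at p))) = 1"
    using le2 ge1 ne2 unfolding D_def by linarith
qed

end
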